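(* In the setting below, let $(x^{(k)},z^{(k)})$ be generated by the Bregman PD3O algorithm \[x^{(k+1)}=\mathrm{prox}^{\phi_{\mathrm p}}_{\tau f}\big(x^{(k)},\tau A^Tz^{(k)}+\tau\nabla h(x^{(k)})\big),\] \[z^{(k+1)}=\mathrm{prox}^{\phi_{\mathrm d}}_{\sigma g^*}\Big(z^{(k)},-\sigma A\big(2x^{(k+1)}-x^{(k)}+\tau(\nabla h(x^{(k)})-\nabla h(x^{(k+1)}))\big)\Big),\] with $x^{(0)}\in\operatorname{int}(\operatorname{dom}\phi_{\mathrm p})$, $z^{(0)}\in\operatorname{int}(\operatorname{dom}\phi_{\mathrm d})$. Then for every $k\ge0$, all $x\in\operatorname{dom}f\cap\operatorname{dom}\phi_{\mathrm p}$ and all $z\in\operatorname{dom}g^*\cap\operatorname{dom}\phi_{\mathrm d}$, \begin{align*}\mathcal L(x^{(k+1)},z)-\mathcal L(x,z^{(k+1)})\le{}& d_{\mathrm{pd3o}}\big(x,\nabla h(x),z;x^{(k)},\nabla h(x^{(k)}),z^{(k)}\big)-d_{\mathrm{pd3o}}\big(x,\nabla h(x),z;x^{(k+1)},\nabla h(x^{(k+1)}),z^{(k+1)}\big)\\&-d_{\mathrm{pd3o}}\big(x^{(k+1)},\nabla h(x),z^{(k+1)};x^{(k)},\nabla h(x^{(k)}),z^{(k)}\big).\end{align*}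
   Context: Setting: $f:\mathbb R^n\to\mathbb R\cup\{+\infty\}$ and $g:\mathbb R^m\to\mathbb R\cup\{+\infty\}$ closed convex, $g$ and $f+h$ proper, $A\in\mathbb R^{m\times n}$, $g^*$ the conjugate of $g$. $h:\mathbb R^n\to\mathbb R$ is convex and differentiable with $h(y)-h(x)-\langle\nabla h(x),y-x\rangle\le\frac L2\|y-x\|^2$ for all $x,y$ (Euclidean norm), $L>0$. Lagrangian $\mathcal L(x,z)=f(x)+h(x)+\langle z,Ax\rangle-g^*(z)$ (value $+\infty$ if $x\notin\operatorname{dom}f$, $-\infty$ if $x\in\operatorname{dom}f$, $z\notin\operatorname{dom}g^*$). A Bregman kernel $\phi$ is convex with $\operatorname{int}(\operatorname{dom}\phi)\ne\emptyset$, continuous on $\operatorname{dom}\phi$, continuously differentiable on the interior; distance $d(x,y)=\phi(x)-\phi(y)-\langle\nabla\phi(y),x-y\rangle$ on $\operatorname{dom}\phi\times\operatorname{int}(\operatorname{dom}\phi)$; $\mathrm{prox}^\phi_F(y,a)=\operatorname{argmin}_x\big(F(x)+\langle a,x\rangle+d(x,y)\big)$, assumed to be a unique point of $\operatorname{int}(\operatorname{dom}\phi)$ for all $a$ and $y\in\operatorname{int}(\operatorname{dom}\phi)$. Kernels $\phi_{\mathrm p}$ (on $\mathbb R^n$), $\phi_{\mathrm d}$ (on $\mathbb R^m$) have distances with $d_{\mathrm p}(x,x')\ge\frac12\|x-x'\|^2$ and $d_{\mathrm d}(z,z')\ge\frac12\|z-z'\|_{\mathrm d}^2$ for a norm $\|\cdot\|_{\mathrm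 d}$. $\|A\|=\sup_{v\ne0}\|Av\|_{\mathrm d,*}/\|v\|$ with $\|\cdot\|_{\mathrm d,*}$ the dual norm. Stepsizes $\sigma,\tau>0$ satisfy $\sigma\tau\|A\|^2\le1$ and $\tau\le1/L$. The optimality conditions $0\in\partial f(x)+\nabla h(x)+A^Tz$, $0\in\partial g^*(z)-Ax$ have a solution in $\operatorname{dom}\phi_{\mathrm p}\times\operatorname{dom}\phi_{\mathrm d}$. Finally $d_{\mathrm{pd3o}}(x,y,z;x',y',z')=\frac1\tau d_{\mathrm p}(x,x')+\frac1\sigma d_{\mathrm d}(z,z')+\frac\tau2\|y-y'\|^2-\langle y-y',x-x'\rangle-\langle z-z',A(x-x')\rangle+\tau\langle z-z',A(y-y')\rangle$. *)

theory Defs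
  imports "HOL-Analysis.Analysis"
begin

definition edom :: "('a \<Rightarrow> ereal) \<Rightarrow> 'a set" where
  "edom F = {x. F x < \<infinity>}"

definition epigraph :: "('a \<Rightarrow> ereal) \<Rightarrow> ('a \<times> real) set" where
  "epigraph F = {(x, r). F x \<le> ereal r}"

definition convex_fun :: "('a::real_vector \<Rightarrow> ereal) \<Rightarrow> bool" where
  "convex_fun F \<longleftrightarrow> convex (epigraph F)"

definition closed_fun :: "('a::topological_space \<Rightarrow> ereal) \<Rightarrow> bool" where
  "closed_fun F \<longleftrightarrow> closed (epigraph F)"

definition proper_fun :: "('a \<Rightarrow> ereal) \<Rightarrow> bool" where
  "proper_fun F \<longleftrightarrow> (\<exists>x. F x < \<infinity>) \<and> (\<forall>x. F x > -\<infinity>)"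

definition conjugate :: "('a::real_inner \<Rightarrow> ereal) \<Rightarrow> 'a \<Rightarrow> ereal" where
  "conjugate g z = (SUP y. ereal (z \<bullet> y) - g y)"

definition subdiff :: "('a::real_inner \<Rightarrow> ereal) \<Rightarrow> 'a \<Rightarrow> 'a set" where
  "subdiff F x = {v. \<bar>F x\<bar> \<noteq> \<infinity> \<and> (\<forall>y. F y \<ge> F x + ereal (v \<bullet> (y - x)))}"

definition is_norm :: "('a::real_vector \<Rightarrow> real) \<Rightarrow> bool" where
  "is_norm N \<longleftrightarrow> (\<forall>x. N x \<ge> 0) \<and> (\<forall>x. N x = 0 \<longleftrightarrow> x = 0)
     \<and> (\<forall>c x. N (c *\<^sub>R x) = \<bar>c\<bar> * N x) \<and> (\<forall>x y. N (x + y) \<le> N x + N y)"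

definition dual_norm :: "('a::real_inner \<Rightarrow> real) \<Rightarrow> 'a \<Rightarrow> real" where
  "dual_norm N w = Sup {w \<bullet> v | v. N v \<le> 1}"

definition op_norm_d :: "(real^'m \<Rightarrow> real) \<Rightarrow> real^'n^'m \<Rightarrow> real" where
  "op_norm_d N A = Sup {dual_norm N (A *v v) / norm v | v. v \<noteq> 0}"

definition bregman_kernel :: "('a::euclidean_space \<Rightarrow> ereal) \<Rightarrow> ('a \<Rightarrow> 'a) \<Rightarrow> bool" where
  "bregman_kernel \<phi> d\<phi> \<longleftrightarrow> convex_fun \<phi> \<and> (\<forall>x. \<phi> x > -\<infinity>)
     \<and> interior (edom \<phi>) \<noteq> {}
     \<and> continuous_on (edom \<phi>) (\<lambda>x. real_of_ereal (\<phi> x))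
     \<and> (\<forall>x\<in>interior (edom \<phi>). ((\<lambda>y. real_of_ereal (\<phi> y)) has_derivative (\<lambda>v. d\<phi> x \<bullet> v)) (at x))
     \<and> continuous_on (interior (edom \<phi>)) d\<phi>"

definition bdist :: "('a::real_inner \<Rightarrow> ereal) \<Rightarrow> ('a \<Rightarrow> 'a) \<Rightarrow> 'a \<Rightarrow> 'a \<Rightarrow> real" where
  "bdist \<phi> d\<phi> x y = real_of_ereal (\<phi> x) - real_of_ereal (\<phi> y) - d\<phi> y \<bullet> (x - y)"

definition prox_obj :: "('a::real_inner \<Rightarrow> ereal) \<Rightarrow> ('a \<Rightarrow> ereal) \<Rightarrow> ('a \<Rightarrow> 'a) \<Rightarrow> 'a \<Rightarrow> 'a \<Rightarrow> 'a \<Rightarrow> ereal" where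
  "prox_obj F \<phi> d\<phi> y a x =
     (if x \<in> edom \<phi> then F x + ereal (a \<bullet> x + bdist \<phi> d\<phi> x y) else \<infinity>)"

definition is_prox :: "('a::real_inner \<Rightarrow> ereal) \<Rightarrow> ('a \<Rightarrow> ereal) \<Rightarrow> ('a \<Rightarrow> 'a) \<Rightarrow> 'a \<Rightarrow> 'a \<Rightarrow> 'a \<Rightarrow> bool" where
  "is_prox F \<phi> d\<phi> y a p \<longleftrightarrow> (\<forall>x. prox_obj F \<phi> d\<phi> y a p \<le> prox_obj F \<phi> d\<phi> y a x)"

definition bprox :: "('a::real_inner \<Rightarrow> ereal) \<Rightarrow> ('a \<Rightarrow> ereal) \<Rightarrow> ('a \<Rightarrow> 'a) \<Rightarrow> 'a \<Rightarrow> 'a \<Rightarrow> 'a" where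
  "bprox F \<phi> d\<phi> y a = (THE p. is_prox F \<phi> d\<phi> y a p)"

definition prox_wellposed :: "('a::real_inner \<Rightarrow> ereal) \<Rightarrow> ('a \<Rightarrow> ereal) \<Rightarrow> ('a \<Rightarrow> 'a) \<Rightarrow> bool" where
  "prox_wellposed F \<phi> d\<phi> \<longleftrightarrow> (\<forall>a. \<forall>y\<in>interior (edom \<phi>).
     (\<exists>!p. is_prox F \<phi> d\<phi> y a p) \<and> (\<forall>p. is_prox F \<phi> d\<phi> y a p \<longrightarrow> p \<in> interior (edom \<phi>)))"

definition lagrangian :: "(real^'n \<Rightarrow> ereal) \<Rightarrow> (real^'n \<Rightarrow> real) \<Rightarrow> real^'n^'m
     \<Rightarrow> (real^'m \<Rightarrow> ereal) \<Rightarrow> real^'n \<Rightarrow> real^'m \<Rightarrow> ereal" where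
  "lagrangian f h A g x z =
     (if x \<notin> edom f then \<infinity>
      else if z \<notin> edom (conjugate g) then -\<infinity>
      else f x + ereal (h x + z \<bullet> (A *v x)) - conjugate g z)"

definition d_pd3o :: "real \<Rightarrow> real \<Rightarrow> real^'n^'m \<Rightarrow> (real^'n \<Rightarrow> real^'n \<Rightarrow> real)
     \<Rightarrow> (real^'m \<Rightarrow> real^'m \<Rightarrow> real)
     \<Rightarrow> real^'n \<Rightarrow> real^'n \<Rightarrow> real^'m \<Rightarrow> real^'n \<Rightarrow> real^'n \<Rightarrow> real^'m \<Rightarrow> real" where
  "d_pd3o \<tau> \<sigma> A dp dd x y z x' y' z' =
     (1/\<tau>) * dp x x' + (1/\<sigma>) * dd z z' + (\<tau>/2) * (norm (y - y'))\<^sup>2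
     - (y - y') \<bullet> (x - x') - (z - z') \<bullet> (A *v (x - x')) + \<tau> * ((z - z') \<bullet> (A *v (y - y')))"

end

theory Submission
  imports Defs
begin


lemma dir_quot_tendsto:
  fixes F :: "'a::real_normed_vector \<Rightarrow> real"
  assumes "(F has_derivative (\<lambda>v. G v)) (at p)" "linear G"
  shows "((\<lambda>t. (F (p + t *\<^sub>R d) - F p) / t) \<longlongrightarrow> G d) (at_right 0)"
proof -
  have l: "((\<lambda>t::real. p + t *\<^sub>R d) has_derivative (\<lambda>s. s *\<^sub>R d)) (at 0)"
    by (auto intro!: derivative_eq_intros)
  have "((\<lambda>t. F (p + t *\<^sub>R d)) has_derivative (\<lambda>s. G (s *\<^sub>R d))) (at 0)"
    using has_derivative_compose[OF l, of F G] assms(1) by (simp add: o_def)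
  hence "((\<lambda>t. F (p + t *\<^sub>R d)) has_field_derivative G d) (at 0)"
  proof -
    have eq: "(*) (G d) = (\<lambda>s. s * G d)" by (rule ext) simp
    show ?thesis unfolding has_field_derivative_def eq
      using \<open>((\<lambda>t. F (p + t *\<^sub>R d)) has_derivative (\<lambda>s. G (s *\<^sub>R d))) (at 0)\<close> assms(2)
      by (simp add: linear.scaleR)
  qed
  hence "((\<lambda>t. F (p + t *\<^sub>R d)) has_field_derivative G d) (at 0 within {0<..})"
    by (rule has_field_derivative_at_within)
  thus ?thesis by (simp add: has_field_derivative_iff at_within_open)
qed

lemma dir_ge:
  fixes F :: "'a::real_inner \<Rightarrow> real"
  assumes "(F has_derivative (\<lambda>v. G \<bullet> v)) (at p)"
    and "\<And>t. 0 < t \<Longrightarrow> t \<le> 1 \<Longrightarrow> c * t \<le> F (p + t *\<^sub>R d) - F p"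
  shows "c \<le> G \<bullet> d"
proof -
  have lin: "linear (\<lambda>v. G \<bullet> v)" by (simp add: linear_iff inner_add_right)
  have T: "((\<lambda>t. (F (p + t *\<^sub>R d) - F p) / t) \<longlongrightarrow> G \<bullet> d) (at_right 0)"
    using dir_quot_tendsto[OF assms(1) lin] by simp
  have "\<forall>\<^sub>F t in at_right 0. c \<le> (F (p + t *\<^sub>R d) - F p) / t"
  proof -
    have "\<forall>\<^sub>F t in at_right (0::real). 0 < t \<and> t < 1"
      by (intro eventually_conj eventually_at_right_less) (auto simp: eventually_at_right_field intro: exI[of _ 1])
    thus ?thesis
    proof (rule eventually_mono)
      fix t :: real assume "0 < t \<and> t < 1"
      with assms(2)[of t] show "c \<le> (F (p + t *\<^sub>R d) - F p) / t"
        by (simp add: pos_le_divide_eq)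
    qed
  qed
  from tendsto_lowerbound[OF T this] show ?thesis by simp
qed

lemma dir_le:
  fixes F :: "'a::real_inner \<Rightarrow> real"
  assumes "(F has_derivative (\<lambda>v. G \<bullet> v)) (at p)"
    and "\<And>t. 0 < t \<Longrightarrow> t \<le> 1 \<Longrightarrow> F (p + t *\<^sub>R d) - F p \<le> c * t"
  shows "G \<bullet> d \<le> c"
proof -
  have "((\<lambda>x. - F x) has_derivative (\<lambda>v. (- G) \<bullet> v)) (at p)"
    using has_derivative_minus[OF assms(1)] by simp
  moreover have "\<And>t. 0 < t \<Longrightarrow> t \<le> 1 \<Longrightarrow> (-c) * t \<le> - F (p + t *\<^sub>R d) - - F p"
    using assms(2) by fastforce
  ultimately have "-c \<le> (-G) \<bullet> d" by (rule dir_ge)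
  thus ?thesis by simp
qed

lemma grad_ineq:
  fixes h :: "'a::real_inner \<Rightarrow> real"
  assumes "convex_on UNIV h" "(h has_derivative (\<lambda>v. G \<bullet> v)) (at x)"
  shows "h x + G \<bullet> (y - x) \<le> h y"
proof -
  have "G \<bullet> (y - x) \<le> h y - h x"
  proof (rule dir_le[OF assms(2)])
    fix t :: real assume t: "0 < t" "t \<le> 1"
    have "h ((1 - t) *\<^sub>R x + t *\<^sub>R y) \<le> (1 - t) * h x + t * h y"
      using assms(1) t by (intro convex_onD) auto
    moreover have "x + t *\<^sub>R (y - x) = (1 - t) *\<^sub>R x + t *\<^sub>R y"
      by (simp add: algebra_simps)
    ultimately show "h (x + t *\<^sub>R (y - x)) - h x \<le> (h y - h x) * t"
      by (simp add: algebra_simps)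
  qed
  thus ?thesis by simp
qed

lemma cocoercive:
  fixes h :: "'a::real_inner \<Rightarrow> real"
  assumes conv: "convex_on UNIV h" and grad: "\<And>x. (h has_derivative (\<lambda>v. gh x \<bullet> v)) (at x)"
    and L: "L > 0"
    and sm: "\<And>x y. h y - h x - gh x \<bullet> (y - x) \<le> L / 2 * (norm (y - x))\<^sup>2"
  shows "h x + gh x \<bullet> (y - x) + 1 / (2 * L) * (norm (gh y - gh x))\<^sup>2 \<le> h y"
proof -
  define \<delta> where "\<delta> = gh y - gh x"
  define w where "w = y - (1 / L) *\<^sub>R \<delta>"
  have 1: "h x + gh x \<bullet> (w - x) \<le> h w" by (rule grad_ineq[OF conv grad])
  have 2: "h w - h y - gh y \<bullet> (w - y) \<le> L / 2 * (norm (w - y))\<^sup>2" by (rule sm)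
  have wy: "w - y = - (1 / L) *\<^sub>R \<delta>" by (simp add: w_def)
  have n: "(norm (w - y))\<^sup>2 = (1 / L)\<^sup>2 * (norm \<delta>)\<^sup>2"
    unfolding wy using L by (simp add: power_divide)
  have i1: "gh y \<bullet> (w - y) = - ((1 / L) * (gh y \<bullet> \<delta>))" unfolding wy by simp
  have i2: "gh x \<bullet> (w - x) = gh x \<bullet> (y - x) - (1 / L) * (gh x \<bullet> \<delta>)"
    unfolding w_def by (simp add: inner_diff_right)
  have dd: "gh y \<bullet> \<delta> - gh x \<bullet> \<delta> = (norm \<delta>)\<^sup>2"
    by (simp add: \<delta>_def power2_norm_eq_inner inner_diff_left)
  have "L / 2 * ((1 / L)\<^sup>2 * (norm \<delta>)\<^sup>2) = 1 / (2 * L) * (norm \<delta>)\<^sup>2"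
    using L by (simp add: power2_eq_square field_simps)
  moreover have "(1/L) * (gh y \<bullet> \<delta>) - (1/L) * (gh x \<bullet> \<delta>) = 2 * (1 / (2 * L) * (norm \<delta>)\<^sup>2)"
    using dd L by (simp add: field_simps)
  ultimately show ?thesis using 1 2 i1 i2 unfolding \<delta>_def[symmetric] n by linarith
qed

lemma convex_fun_seg:
  assumes "convex_fun F" "F u \<le> ereal a" "F v \<le> ereal b" "0 \<le> t" "t \<le> 1"
  shows "F ((1 - t) *\<^sub>R u + t *\<^sub>R v) \<le> ereal ((1 - t) * a + t * b)"
proof -
  have "(1 - t) *\<^sub>R (u, a) + t *\<^sub>R (v, b) \<in> epigraph F"
    using assms unfolding convex_fun_def
    by (intro convexD) (auto simp: epigraph_def)
  thus ?thesis by (simp add: epigraph_def)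
qed

lemma three_point:
  fixes F :: "'a::euclidean_space \<Rightarrow> ereal"
  assumes k: "bregman_kernel \<phi> d\<phi>"
    and Fseg: "\<And>u v t. F u < \<infinity> \<Longrightarrow> F v < \<infinity> \<Longrightarrow> 0 \<le> t \<Longrightarrow> t \<le> 1 \<Longrightarrow>
        F ((1 - t) *\<^sub>R u + t *\<^sub>R v) \<le> ereal ((1 - t) * real_of_ereal (F u) + t * real_of_ereal (F v))"
    and Fbot: "\<And>u. F u > -\<infinity>"
    and prox: "is_prox F \<phi> d\<phi> y a p"
    and pint: "p \<in> interior (edom \<phi>)"
    and xd: "x \<in> edom \<phi>" and xF: "F x < \<infinity>"
  shows "F p < \<infinity> \<and> real_of_ereal (F p) + a \<bullet> p + bdist \<phi> d\<phi> p y + bdist \<phi> d\<phi> x p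
           \<le> real_of_ereal (F x) + a \<bullet> x + bdist \<phi> d\<phi> x y"
proof -
  define \<Phi> where "\<Phi> = (\<lambda>u. real_of_ereal (\<phi> u))"
  have kc: "convex_fun \<phi>" and kb: "\<And>u. \<phi> u > -\<infinity>"
    and kd: "((\<lambda>y. real_of_ereal (\<phi> y)) has_derivative (\<lambda>v. d\<phi> p \<bullet> v)) (at p)"
    using k pint unfolding bregman_kernel_def by auto
  have pd: "p \<in> edom \<phi>" using pint interior_subset by blast
  have fin: "\<And>u. u \<in> edom \<phi> \<Longrightarrow> \<phi> u = ereal (\<Phi> u)"
  proof -
    fix u assume "u \<in> edom \<phi>"
    hence "\<phi> u < \<infinity>" by (simp add: edom_def)
    with kb[of u] show "\<phi> u = ereal (\<Phi> u)" unfolding \<Phi>_def by (cases "\<phi> u") auto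
  qed
  have bd: "\<And>u v. bdist \<phi> d\<phi> u v = \<Phi> u - \<Phi> v - d\<phi> v \<bullet> (u - v)"
    by (simp add: bdist_def \<Phi>_def)
  obtain Fx where Fx: "F x = ereal Fx" using xF Fbot[of x] by (cases "F x") auto
  have Ole: "prox_obj F \<phi> d\<phi> y a p \<le> prox_obj F \<phi> d\<phi> y a x"
    using prox unfolding is_prox_def by blast
  hence Ole': "F p + ereal (a \<bullet> p + bdist \<phi> d\<phi> p y) \<le> ereal (Fx + (a \<bullet> x + bdist \<phi> d\<phi> x y))"
    using pd xd Fx by (simp add: prox_obj_def)
  obtain Fp where Fp: "F p = ereal Fp"
    using Ole' Fbot[of p] by (cases "F p") auto
  define c where "c = Fp - Fx - a \<bullet> (x - p) + d\<phi> y \<bullet> (x - p)"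
  have "c \<le> d\<phi> p \<bullet> (x - p)"
  proof (rule dir_ge[OF kd])
    fix t :: real assume t: "0 < t" "t \<le> 1"
    define w where "w = p + t *\<^sub>R (x - p)"
    have w': "w = (1 - t) *\<^sub>R p + t *\<^sub>R x" by (simp add: w_def algebra_simps)
    have "\<phi> w \<le> ereal ((1 - t) * \<Phi> p + t * \<Phi> x)"
      unfolding w' using t by (intro convex_fun_seg[OF kc]) (auto simp: fin pd xd)
    hence wd: "w \<in> edom \<phi>" by (auto simp: edom_def)
    have "F w \<le> ereal ((1 - t) * Fp + t * Fx)"
      using Fseg[of p x t] t Fp Fx unfolding w' by simp
    then obtain Fw where Fw: "F w = ereal Fw" and Fwle: "Fw \<le> (1 - t) * Fp + t * Fx"
      using Fbot[of w] by (cases "F w") auto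
    have "prox_obj F \<phi> d\<phi> y a p \<le> prox_obj F \<phi> d\<phi> y a w"
      using prox unfolding is_prox_def by blast
    hence ineq: "Fp + (a \<bullet> p + bdist \<phi> d\<phi> p y) \<le> Fw + (a \<bullet> w + bdist \<phi> d\<phi> w y)"
      using pd wd Fp Fw by (simp add: prox_obj_def)
    have e1: "a \<bullet> w = a \<bullet> p + t * (a \<bullet> (x - p))" by (simp add: w_def inner_add_right)
    have e2: "d\<phi> y \<bullet> (w - y) = d\<phi> y \<bullet> (p - y) + t * (d\<phi> y \<bullet> (x - p))"
      by (simp add: w_def inner_add_right inner_diff_right)
    have e3: "c * t = t * Fp - t * Fx - t * (a \<bullet> (x - p)) + t * (d\<phi> y \<bullet> (x - p))"
      by (simp add: c_def algebra_simps)
    have e4: "(1 - t) * Fp = Fp - t * Fp" by (simp add: algebra_simps)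
    show "c * t \<le> real_of_ereal (\<phi> (p + t *\<^sub>R (x - p))) - real_of_ereal (\<phi> p)"
      using ineq Fwle e1 e2 e3 e4 unfolding bd w_def[symmetric] \<Phi>_def by linarith
  qed
  moreover have "real_of_ereal (F p) = Fp" "real_of_ereal (F x) = Fx" using Fp Fx by auto
  ultimately show ?thesis using Fp
    by (simp add: bd c_def inner_diff_right inner_diff_left)
qed

lemma seg_scale:
  fixes F :: "'a::real_vector \<Rightarrow> ereal"
  assumes bot: "\<And>u. F u > -\<infinity>"
    and seg: "\<And>u v (t::real). F u < \<infinity> \<Longrightarrow> F v < \<infinity> \<Longrightarrow> 0 \<le> t \<Longrightarrow> t \<le> 1 \<Longrightarrow>
        F ((1 - t) *\<^sub>R u + t *\<^sub>R v) \<le> ereal ((1 - t) * real_of_ereal (F u) + t * real_of_ereal (F v))"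
    and c: "c > 0"
  shows "\<And>u. ereal c * F u > -\<infinity>"
    and "\<And>u v (t::real). ereal c * F u < \<infinity> \<Longrightarrow> ereal c * F v < \<infinity> \<Longrightarrow> 0 \<le> t \<Longrightarrow> t \<le> 1 \<Longrightarrow>
        ereal c * F ((1 - t) *\<^sub>R u + t *\<^sub>R v) \<le> ereal ((1 - t) * real_of_ereal (ereal c * F u) + t * real_of_ereal (ereal c * F v))"
proof -
  fix u show "ereal c * F u > -\<infinity>" using bot[of u] c by (cases "F u") auto
next
  fix u v and t :: real assume a: "ereal c * F u < \<infinity>" "ereal c * F v < \<infinity>" "0 \<le> t" "t \<le> 1"
  obtain a1 where a1: "F u = ereal a1" using a(1) bot[of u] c by (cases "F u") auto
  obtain b1 where b1: "F v = ereal b1" using a(2) bot[of v] c by (cases "F v") auto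
  have "F ((1 - t) *\<^sub>R u + t *\<^sub>R v) \<le> ereal ((1 - t) * a1 + t * b1)"
    using seg[of u v t] a a1 b1 by simp
  hence "ereal c * F ((1 - t) *\<^sub>R u + t *\<^sub>R v) \<le> ereal c * ereal ((1 - t) * a1 + t * b1)"
    using c by (intro ereal_mult_left_mono) auto
  thus "ereal c * F ((1 - t) *\<^sub>R u + t *\<^sub>R v) \<le> ereal ((1 - t) * real_of_ereal (ereal c * F u) + t * real_of_ereal (ereal c * F v))"
    using a1 b1 by (simp add: algebra_simps)
qed

lemma conj_bot:
  assumes "proper_fun g" shows "conjugate g z > -\<infinity>"
proof -
  obtain y where y: "g y < \<infinity>" and yb: "g y > -\<infinity>" using assms unfolding proper_fun_def by blast
  obtain r where r: "g y = ereal r" using y yb by (cases "g y") auto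
  have "ereal (z \<bullet> y) - g y \<le> conjugate g z" unfolding conjugate_def by (rule SUP_upper) simp
  thus ?thesis using r by auto
qed

lemma conj_seg:
  assumes pg: "proper_fun g"
    and a: "conjugate g u < \<infinity>" "conjugate g v < \<infinity>" "0 \<le> t" "t \<le> 1"
  shows "conjugate g ((1 - t) *\<^sub>R u + t *\<^sub>R v)
           \<le> ereal ((1 - t) * real_of_ereal (conjugate g u) + t * real_of_ereal (conjugate g v))"
proof -
  obtain a1 where a1: "conjugate g u = ereal a1" using a(1) conj_bot[OF pg, of u] by (cases "conjugate g u") auto
  obtain b1 where b1: "conjugate g v = ereal b1" using a(2) conj_bot[OF pg, of v] by (cases "conjugate g v") auto
  have "ereal (((1 - t) *\<^sub>R u + t *\<^sub>R v) \<bullet> y) - g y \<le> ereal ((1 - t) * a1 + t * b1)" for y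
  proof (cases "g y")
    case (real r)
    have "ereal (u \<bullet> y) - g y \<le> conjugate g u" unfolding conjugate_def by (rule SUP_upper) simp
    hence 1: "u \<bullet> y - r \<le> a1" using real a1 by simp
    have "ereal (v \<bullet> y) - g y \<le> conjugate g v" unfolding conjugate_def by (rule SUP_upper) simp
    hence 2: "v \<bullet> y - r \<le> b1" using real b1 by simp
    have "(1 - t) * (u \<bullet> y - r) \<le> (1 - t) * a1" using 1 a by (intro mult_left_mono) auto
    moreover have "t * (v \<bullet> y - r) \<le> t * b1" using 2 a by (intro mult_left_mono) auto
    ultimately show ?thesis using real by (simp add: inner_add_left algebra_simps)
  next
    case PInf thus ?thesis by simp
  next
    case MInf thus ?thesis using pg unfolding proper_fun_def by (metis MInfty_neq_PInfty(1) ereal_infty_less(2))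
  qed
  hence "conjugate g ((1 - t) *\<^sub>R u + t *\<^sub>R v) \<le> ereal ((1 - t) * a1 + t * b1)"
    unfolding conjugate_def by (rule SUP_least)
  thus ?thesis using a1 b1 by simp
qed

lemma ident2:
  fixes A :: "real^'n^'m" and x x1 xk g0 g1 gb :: "real^'n" and z z1 zk :: "real^'m"
  shows "(transpose A *v zk + g0) \<bullet> (x - x1) + g1 \<bullet> (x1 - x) + (z \<bullet> (A *v x1) - z1 \<bullet> (A *v x))
     + - ((A *v (2 *\<^sub>R x1 - xk + \<tau> *\<^sub>R (g0 - g1))) \<bullet> (z - z1))
   = (g0 - g1) \<bullet> (x - x1) - (z - z1) \<bullet> (A *v (x1 - xk)) - (z1 - zk) \<bullet> (A *v (x - x1))
     + \<tau> * ((z - z1) \<bullet> (A *v (g1 - g0)))"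
  by (simp add: transpose_matrix_vector dot_lmul_matrix inner_add_left inner_add_right inner_diff_left
     inner_diff_right matrix_vector_mult_diff_distrib matrix_vector_right_distrib
     matrix_vector_mult_scaleR inner_commute[of "A *v _"] algebra_simps)

lemma ident1:
  fixes A :: "real^'n^'m" and x x1 xk g0 g1 gb :: "real^'n" and z z1 zk :: "real^'m"
  shows "d_pd3o \<tau> \<sigma> A dp dd x gb z xk g0 zk - d_pd3o \<tau> \<sigma> A dp dd x gb z x1 g1 z1
     - d_pd3o \<tau> \<sigma> A dp dd x1 gb z1 xk g0 zk
   = (1/\<tau>) * (dp x xk - dp x x1 - dp x1 xk) + (1/\<sigma>) * (dd z zk - dd z z1 - dd z1 zk)
     - (\<tau>/2) * (norm (gb - g1))\<^sup>2
     + ((g0 - g1) \<bullet> (x - x1) - (z - z1) \<bullet> (A *v (x1 - xk)) - (z1 - zk) \<bullet> (A *v (x - x1))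
     + \<tau> * ((z - z1) \<bullet> (A *v (g1 - g0))))"
  unfolding d_pd3o_def
  by (simp add: inner_add_left inner_add_right inner_diff_left
     inner_diff_right matrix_vector_mult_diff_distrib matrix_vector_right_distrib
     matrix_vector_mult_scaleR algebra_simps)
lemma prox_the:
  assumes "prox_wellposed F \<phi> d\<phi>" "y \<in> interior (edom \<phi>)"
  shows "is_prox F \<phi> d\<phi> y a (bprox F \<phi> d\<phi> y a) \<and> bprox F \<phi> d\<phi> y a \<in> interior (edom \<phi>)"
proof -
  have ex: "\<exists>!p. is_prox F \<phi> d\<phi> y a p" and all: "\<forall>p. is_prox F \<phi> d\<phi> y a p \<longrightarrow> p \<in> interior (edom \<phi>)"
    using assms unfolding prox_wellposed_def by auto
  have "is_prox F \<phi> d\<phi> y a (bprox F \<phi> d\<phi> y a)"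
    unfolding bprox_def by (rule theI'[OF ex])
  with all show ?thesis by blast
qed

theorem mainTheorem8:
  fixes f :: "real^'n \<Rightarrow> ereal" and g :: "real^'m \<Rightarrow> ereal"
    and h :: "real^'n \<Rightarrow> real" and gh :: "real^'n \<Rightarrow> real^'n"
    and A :: "real^'n^'m" and L \<sigma> \<tau> :: real
    and \<phi>p :: "real^'n \<Rightarrow> ereal" and d\<phi>p :: "real^'n \<Rightarrow> real^'n"
    and \<phi>d :: "real^'m \<Rightarrow> ereal" and d\<phi>d :: "real^'m \<Rightarrow> real^'m"
    and nd :: "real^'m \<Rightarrow> real"
    and xs :: "nat \<Rightarrow> real^'n" and zs :: "nat \<Rightarrow> real^'m"
  assumes f_cc: "convex_fun f" "closed_fun f"
    and g_cc: "convex_fun g" "closed_fun g" "proper_fun g"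
    and fh_proper: "proper_fun (\<lambda>x. f x + ereal (h x))"
    and h_conv: "convex_on UNIV h"
    and h_grad: "\<And>x. (h has_derivative (\<lambda>v. gh x \<bullet> v)) (at x)"
    and L_pos: "L > 0"
    and h_smooth: "\<And>x y. h y - h x - gh x \<bullet> (y - x) \<le> L / 2 * (norm (y - x))\<^sup>2"
    and kp: "bregman_kernel \<phi>p d\<phi>p" and kd: "bregman_kernel \<phi>d d\<phi>d"
    and nd_norm: "is_norm nd"
    and dp_strong: "\<And>x x'. x \<in> edom \<phi>p \<Longrightarrow> x' \<in> interior (edom \<phi>p) \<Longrightarrow>
                       bdist \<phi>p d\<phi>p x x' \<ge> 1/2 * (norm (x - x'))\<^sup>2"
    and dd_strong: "\<And>z z'. z \<in> edom \<phi>d \<Longrightarrow> z' \<in> interior (edom \<phi>d) \<Longrightarrow>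
                       bdist \<phi>d d\<phi>d z z' \<ge> 1/2 * (nd (z - z'))\<^sup>2"
    and steps: "\<sigma> > 0" "\<tau> > 0" "\<sigma> * \<tau> * (op_norm_d nd A)\<^sup>2 \<le> 1" "\<tau> \<le> 1 / L"
    and prox_p: "prox_wellposed (\<lambda>x. ereal \<tau> * f x) \<phi>p d\<phi>p"
    and prox_d: "prox_wellposed (\<lambda>z. ereal \<sigma> * conjugate g z) \<phi>d d\<phi>d"
    and saddle: "\<exists>xo zo. xo \<in> edom \<phi>p \<and> zo \<in> edom \<phi>d
                   \<and> - (gh xo + transpose A *v zo) \<in> subdiff f xo
                   \<and> A *v xo \<in> subdiff (conjugate g) zo"
    and x0: "xs 0 \<in> interior (edom \<phi>p)" and z0: "zs 0 \<in> interior (edom \<phi>d)"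
    and x_step: "\<And>k. xs (Suc k) = bprox (\<lambda>x. ereal \<tau> * f x) \<phi>p d\<phi>p (xs k)
                        (\<tau> *\<^sub>R (transpose A *v zs k) + \<tau> *\<^sub>R gh (xs k))"
    and z_step: "\<And>k. zs (Suc k) = bprox (\<lambda>z. ereal \<sigma> * conjugate g z) \<phi>d d\<phi>d (zs k)
                        (- \<sigma> *\<^sub>R (A *v (2 *\<^sub>R xs (Suc k) - xs k
                                 + \<tau> *\<^sub>R (gh (xs k) - gh (xs (Suc k))))))"
    and x_dom: "x \<in> edom f \<inter> edom \<phi>p"
    and z_dom: "z \<in> edom (conjugate g) \<inter> edom \<phi>d"
  shows "lagrangian f h A g (xs (Suc k)) z - lagrangian f h A g x (zs (Suc k))
     \<le> ereal (d_pd3o \<tau> \<sigma> A (bdist \<phi>p d\<phi>p) (bdist \<phi>d d\<phi>d) x (gh x) z (xs k) (gh (xs k)) (zs k)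
        - d_pd3o \<tau> \<sigma> A (bdist \<phi>p d\<phi>p) (bdist \<phi>d d\<phi>d) x (gh x) z (xs (Suc k)) (gh (xs (Suc k))) (zs (Suc k))
        - d_pd3o \<tau> \<sigma> A (bdist \<phi>p d\<phi>p) (bdist \<phi>d d\<phi>d) (xs (Suc k)) (gh x) (zs (Suc k)) (xs k) (gh (xs k)) (zs k))"
proof -
  have fbot: "\<And>u. f u > -\<infinity>"
  proof -
    fix u have "f u + ereal (h u) > -\<infinity>" using fh_proper unfolding proper_fun_def by blast
    thus "f u > -\<infinity>" by (cases "f u") auto
  qed
  have fseg: "\<And>u v (t::real). f u < \<infinity> \<Longrightarrow> f v < \<infinity> \<Longrightarrow> 0 \<le> t \<Longrightarrow> t \<le> 1 \<Longrightarrow>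
      f ((1 - t) *\<^sub>R u + t *\<^sub>R v) \<le> ereal ((1 - t) * real_of_ereal (f u) + t * real_of_ereal (f v))"
  proof -
    fix u v and t :: real assume a: "f u < \<infinity>" "f v < \<infinity>" "0 \<le> t" "t \<le> 1"
    have eu: "f u = ereal (real_of_ereal (f u))" using a(1) fbot[of u] by (cases "f u") auto
    have ev: "f v = ereal (real_of_ereal (f v))" using a(2) fbot[of v] by (cases "f v") auto
    show "f ((1 - t) *\<^sub>R u + t *\<^sub>R v) \<le> ereal ((1 - t) * real_of_ereal (f u) + t * real_of_ereal (f v))"
      using a eu ev by (intro convex_fun_seg[OF f_cc(1)]) auto
  qed
  note Fpb = seg_scale(1)[OF fbot fseg steps(2)]
  note Fps = seg_scale(2)[OF fbot fseg steps(2)]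
  note gbot = conj_bot[OF g_cc(3)]
  note gseg = conj_seg[OF g_cc(3)]
  note Fdb = seg_scale(1)[OF gbot gseg steps(1)]
  note Fds = seg_scale(2)[OF gbot gseg steps(1)]
  have ints: "\<And>k. xs k \<in> interior (edom \<phi>p) \<and> zs k \<in> interior (edom \<phi>d)"
  proof -
    fix k show "xs k \<in> interior (edom \<phi>p) \<and> zs k \<in> interior (edom \<phi>d)"
    proof (induction k)
      case 0 show ?case using x0 z0 by simp
    next
      case (Suc k)
      thus ?case using prox_the[OF prox_p] prox_the[OF prox_d] x_step[of k] z_step[of k] by simp
    qed
  qed
  define x1 where "x1 = xs (Suc k)"
  define xk where "xk = xs k"
  define z1 where "z1 = zs (Suc k)"
  define zk where "zk = zs k"
  define g0 where "g0 = gh xk"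
  define g1 where "g1 = gh x1"
  define gb where "gb = gh x"
  define ap where "ap = \<tau> *\<^sub>R (transpose A *v zk) + \<tau> *\<^sub>R g0"
  define v where "v = 2 *\<^sub>R x1 - xk + \<tau> *\<^sub>R (g0 - g1)"
  define bd where "bd = - \<sigma> *\<^sub>R (A *v v)"
  have proxp: "is_prox (\<lambda>x. ereal \<tau> * f x) \<phi>p d\<phi>p xk ap x1"
    using prox_the[OF prox_p, of xk ap] ints[of k] x_step[of k]
    by (simp add: x1_def xk_def ap_def zk_def g0_def)
  have proxd: "is_prox (\<lambda>z. ereal \<sigma> * conjugate g z) \<phi>d d\<phi>d zk bd z1"
    using prox_the[OF prox_d, of zk bd] ints[of k] z_step[of k]
    by (simp add: z1_def zk_def bd_def v_def x1_def xk_def g0_def g1_def)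
  have x1int: "x1 \<in> interior (edom \<phi>p)" and z1int: "z1 \<in> interior (edom \<phi>d)"
    using ints[of "Suc k"] by (auto simp: x1_def z1_def)
  obtain fx where fx: "f x = ereal fx" using x_dom fbot[of x] by (cases "f x") (auto simp: edom_def)
  obtain gz where gz: "conjugate g z = ereal gz" using z_dom gbot[of z] by (cases "conjugate g z") (auto simp: edom_def)
  have xF: "ereal \<tau> * f x < \<infinity>" using fx by simp
  have zG: "ereal \<sigma> * conjugate g z < \<infinity>" using gz by simp
  have P: "ereal \<tau> * f x1 < \<infinity> \<and> real_of_ereal (ereal \<tau> * f x1) + ap \<bullet> x1 + bdist \<phi>p d\<phi>p x1 xk + bdist \<phi>p d\<phi>p x x1
           \<le> real_of_ereal (ereal \<tau> * f x) + ap \<bullet> x + bdist \<phi>p d\<phi>p x xk"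
    by (rule three_point[where F="\<lambda>x. ereal \<tau> * f x", OF kp Fps Fpb proxp x1int _ xF])
      (use x_dom in auto)
  have D: "ereal \<sigma> * conjugate g z1 < \<infinity> \<and> real_of_ereal (ereal \<sigma> * conjugate g z1) + bd \<bullet> z1 + bdist \<phi>d d\<phi>d z1 zk + bdist \<phi>d d\<phi>d z z1
           \<le> real_of_ereal (ereal \<sigma> * conjugate g z) + bd \<bullet> z + bdist \<phi>d d\<phi>d z zk"
    by (rule three_point[where F="\<lambda>z. ereal \<sigma> * conjugate g z", OF kd Fds Fdb proxd z1int _ zG])
      (use z_dom in auto)
  obtain fx1 where fx1: "f x1 = ereal fx1" using P fbot[of x1] steps(2) by (cases "f x1") auto
  obtain gz1 where gz1: "conjugate g z1 = ereal gz1" using D gbot[of z1] steps(1) by (cases "conjugate g z1") auto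
  define X where "X = (transpose A *v zk + g0) \<bullet> (x - x1)"
  define Y where "Y = - ((A *v v) \<bullet> (z - z1))"
  define Pa where "Pa = bdist \<phi>p d\<phi>p x xk"
  define Pb where "Pb = bdist \<phi>p d\<phi>p x x1"
  define Pc where "Pc = bdist \<phi>p d\<phi>p x1 xk"
  define Qa where "Qa = bdist \<phi>d d\<phi>d z zk"
  define Qb where "Qb = bdist \<phi>d d\<phi>d z z1"
  define Qc where "Qc = bdist \<phi>d d\<phi>d z1 zk"
  have P1: "\<tau> * fx1 + ap \<bullet> x1 + Pc + Pb \<le> \<tau> * fx + ap \<bullet> x + Pa"
    using P fx fx1 by (simp add: Pa_def Pb_def Pc_def)
  have apX: "ap \<bullet> x - ap \<bullet> x1 = \<tau> * X"
    by (simp add: ap_def X_def inner_add_left inner_diff_right algebra_simps)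
  have "\<tau> * (fx1 - fx - X) \<le> Pa - Pb - Pc" using P1 apX by (simp add: algebra_simps)
  hence P2: "fx1 - fx - X \<le> (1 / \<tau>) * (Pa - Pb - Pc)"
    using steps(2) by (simp add: pos_le_divide_eq mult.commute)
  have D1: "\<sigma> * gz1 + bd \<bullet> z1 + Qc + Qb \<le> \<sigma> * gz + bd \<bullet> z + Qa"
    using D gz gz1 by (simp add: Qa_def Qb_def Qc_def)
  have bdY: "bd \<bullet> z - bd \<bullet> z1 = \<sigma> * Y"
    by (simp add: bd_def Y_def inner_diff_right inner_commute algebra_simps)
  have "\<sigma> * (gz1 - gz - Y) \<le> Qa - Qb - Qc" using D1 bdY by (simp add: algebra_simps)
  hence D2: "gz1 - gz - Y \<le> (1 / \<sigma>) * (Qa - Qb - Qc)"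
    using steps(1) by (simp add: pos_le_divide_eq mult.commute)
  have H: "h x1 + g1 \<bullet> (x - x1) + 1 / (2 * L) * (norm (gb - g1))\<^sup>2 \<le> h x"
    unfolding g1_def gb_def by (rule cocoercive[OF h_conv h_grad L_pos h_smooth])
  have tl: "\<tau> / 2 \<le> 1 / (2 * L)" using steps(4) L_pos by (simp add: field_simps)
  have H2: "\<tau> / 2 * (norm (gb - g1))\<^sup>2 \<le> 1 / (2 * L) * (norm (gb - g1))\<^sup>2"
    using tl by (intro mult_right_mono) auto
  have I2: "X + g1 \<bullet> (x1 - x) + (z \<bullet> (A *v x1) - z1 \<bullet> (A *v x)) + Y
     = (g0 - g1) \<bullet> (x - x1) - (z - z1) \<bullet> (A *v (x1 - xk)) - (z1 - zk) \<bullet> (A *v (x - x1))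
     + \<tau> * ((z - z1) \<bullet> (A *v (g1 - g0)))"
    unfolding X_def Y_def v_def by (rule ident2)
  have I1: "d_pd3o \<tau> \<sigma> A (bdist \<phi>p d\<phi>p) (bdist \<phi>d d\<phi>d) x gb z xk g0 zk
     - d_pd3o \<tau> \<sigma> A (bdist \<phi>p d\<phi>p) (bdist \<phi>d d\<phi>d) x gb z x1 g1 z1
     - d_pd3o \<tau> \<sigma> A (bdist \<phi>p d\<phi>p) (bdist \<phi>d d\<phi>d) x1 gb z1 xk g0 zk
   = (1/\<tau>) * (Pa - Pb - Pc) + (1/\<sigma>) * (Qa - Qb - Qc)
     - (\<tau>/2) * (norm (gb - g1))\<^sup>2
     + ((g0 - g1) \<bullet> (x - x1) - (z - z1) \<bullet> (A *v (x1 - xk)) - (z1 - zk) \<bullet> (A *v (x - x1))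
     + \<tau> * ((z - z1) \<bullet> (A *v (g1 - g0))))"
    unfolding Pa_def Pb_def Pc_def Qa_def Qb_def Qc_def by (rule ident1)
  have g1x: "g1 \<bullet> (x1 - x) = - (g1 \<bullet> (x - x1))" by (simp add: inner_diff_right)
  have x1f: "x1 \<in> edom f" using fx1 by (simp add: edom_def)
  have z1g: "z1 \<in> edom (conjugate g)" using gz1 by (simp add: edom_def)
  have L1: "lagrangian f h A g x1 z = ereal (fx1 + (h x1 + z \<bullet> (A *v x1)) - gz)"
    using x1f z_dom fx1 gz by (simp add: lagrangian_def)
  have L2: "lagrangian f h A g x z1 = ereal (fx + (h x + z1 \<bullet> (A *v x)) - gz1)"
    using x_dom z1g fx gz1 by (simp add: lagrangian_def)
  have main: "(fx1 + (h x1 + z \<bullet> (A *v x1)) - gz) - (fx + (h x + z1 \<bullet> (A *v x)) - gz1)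
     \<le> d_pd3o \<tau> \<sigma> A (bdist \<phi>p d\<phi>p) (bdist \<phi>d d\<phi>d) x gb z xk g0 zk
     - d_pd3o \<tau> \<sigma> A (bdist \<phi>p d\<phi>p) (bdist \<phi>d d\<phi>d) x gb z x1 g1 z1
     - d_pd3o \<tau> \<sigma> A (bdist \<phi>p d\<phi>p) (bdist \<phi>d d\<phi>d) x1 gb z1 xk g0 zk"
    unfolding I1 using P2 D2 H H2 I2 g1x by linarith
  show ?thesis
    using main unfolding L1[unfolded x1_def] L2[unfolded z1_def]
    by (simp add: x1_def xk_def z1_def zk_def g0_def g1_def gb_def)
qed

end
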